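(* For every set $X=\{X^1,\dots,X^m\}\subseteq S_n$ of $m\ge1$ distinct elements, $$\Big|\bigcap_{i=1}^m\mathrm{Elim}(\{X^i\})\Big|=3^{z_X}\Big(-(-2)^{m-1}+\sum_{\alpha\in S_m}(-1)^{z(\alpha)}\,2^{\,z(\alpha)+|\mathrm{BSp}(X,\alpha)|}\Big).$$
   Context: $S_n$ is the set of all nonzero $n$-tuples in $\{-1,0,1\}^n$ whose first nonzero entry equals $1$. A tuple $t=(t_1,\dots,t_n)\in\{1,0,-1,u\}^n$ ($u$ a formal symbol) eliminates $s\in S_n$ if: (i) $t_i\neq0$ and $s_i\neq0$ for some $i$; (ii) there is $k\in\{+1,-1\}$ with $t_i=ks_i$ for all $i$ with $s_i\neq0$ and $t_i\neq0$; (iii) $s_i=0$ whenever $t_i=u$. For $X\subseteq S_n$, $\mathrm{Elim}(X)$ is the set of elements of $S_n$ eliminated by at least one element of $X$. $M_X$ is the $m\times n$ matrix whose $i$-th row is $X^i$; $z_X$ is the number of zero columns of $M_X$. For a tuple $\alpha$, $z(\alpha)$ is the number of its zero coordinates. For $\alpha\in S_m$, $\mathrm{BSp}(X,\alpha)$ is the set of indices $c\in\{1,\dots,n\}$ such that the $c$-th column of $M_X$ is nonzero and equals $\pm(a_1\alpha_1,\dots,a_m\alpha_m)^T$ for some $(a_1,\dots,a_m)\in\{0,1\}^m\setminus\{(0,\dots,0)\}$. *)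

theory Defs
  imports Main
begin

text \<open>n-tuples are lists of length n (index 0..n-1). Entries of tuples t in
{1,0,-1,u}^n are int options, with None playing the role of the formal symbol u.\<close>

definition S :: "nat \<Rightarrow> int list set" where
  "S n = {s. length s = n \<and> set s \<subseteq> {-1, 0, 1} \<and> s \<noteq> replicate n 0
              \<and> (\<exists>j<n. s ! j = 1 \<and> (\<forall>i<j. s ! i = 0))}"

definition eliminates :: "nat \<Rightarrow> int option list \<Rightarrow> int list \<Rightarrow> bool" where
  "eliminates n t s \<longleftrightarrow>
     (\<exists>i<n. t ! i \<noteq> Some 0 \<and> s ! i \<noteq> 0) \<and>
     (\<exists>k\<in>{1, -1::int}. \<forall>i<n. s ! i \<noteq> 0 \<and> t ! i \<noteq> Some 0 \<longrightarrow> t ! i = Some (k * s ! i)) \<and>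
     (\<forall>i<n. t ! i = None \<longrightarrow> s ! i = 0)"

definition Elim :: "nat \<Rightarrow> int list set \<Rightarrow> int list set" where
  "Elim n X = {s \<in> S n. \<exists>x\<in>X. eliminates n (map Some x) s}"

definition zX :: "nat \<Rightarrow> nat \<Rightarrow> (nat \<Rightarrow> int list) \<Rightarrow> nat" where
  "zX m n X = card {c. c < n \<and> (\<forall>i<m. X i ! c = 0)}"

definition zeros :: "int list \<Rightarrow> nat" where
  "zeros \<alpha> = card {i. i < length \<alpha> \<and> \<alpha> ! i = 0}"

definition BSp :: "nat \<Rightarrow> nat \<Rightarrow> (nat \<Rightarrow> int list) \<Rightarrow> int list \<Rightarrow> nat set" where
  "BSp m n X \<alpha> = {c. c < n \<and> (\<exists>i<m. X i ! c \<noteq> 0) \<and>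
     (\<exists>a::nat \<Rightarrow> int. (\<forall>i<m. a i \<in> {0, 1}) \<and> (\<exists>i<m. a i \<noteq> 0) \<and>
        (\<exists>k\<in>{1, -1::int}. \<forall>i<m. X i ! c = k * (a i * \<alpha> ! i)))}"

end

theory Submission imports Defs begin


lemma sum_prod_lists:
  fixes w :: "nat \<Rightarrow> 'b \<Rightarrow> 'a::comm_semiring_1"
  assumes "finite D"
  shows "(\<Sum>\<alpha>\<in>{xs. set xs \<subseteq> D \<and> length xs = m}. \<Prod>i<m. w i (\<alpha>!i)) = (\<Prod>i<m. \<Sum>v\<in>D. w i v)"
proof (induction m arbitrary: w)
  case 0
  have "{xs. set xs \<subseteq> D \<and> length xs = 0} = {[]}" by auto
  then show ?case by simp
next
  case (Suc m)
  have inj: "inj_on (\<lambda>(xs, n). n#xs) ({xs. set xs \<subseteq> D \<and> length xs = m} \<times> D)"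
    by (auto simp: inj_on_def)
  have fin: "finite {xs. set xs \<subseteq> D \<and> length xs = m}"
    using finite_lists_length_eq[OF assms] by simp
  have "(\<Sum>\<alpha>\<in>{xs. set xs \<subseteq> D \<and> length xs = Suc m}. \<Prod>i<Suc m. w i (\<alpha>!i))
      = (\<Sum>(xs,v)\<in>{xs. set xs \<subseteq> D \<and> length xs = m} \<times> D. \<Prod>i<Suc m. w i ((v#xs)!i))"
    unfolding lists_length_Suc_eq by (subst sum.reindex[OF inj]) (simp add: case_prod_beta)
  also have "\<dots> = (\<Sum>xs\<in>{xs. set xs \<subseteq> D \<and> length xs = m}. \<Sum>v\<in>D. w 0 v * (\<Prod>i<m. w (Suc i) (xs!i)))"
    by (subst sum.cartesian_product[symmetric]) (simp del: prod.lessThan_Suc add: prod.lessThan_Suc_shift)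
  also have "\<dots> = (\<Sum>v\<in>D. w 0 v) * (\<Sum>xs\<in>{xs. set xs \<subseteq> D \<and> length xs = m}. \<Prod>i<m. w (Suc i) (xs!i))"
    by (simp add: sum_distrib_right sum_distrib_left mult.commute sum.swap[of _ D])
  also have "\<dots> = (\<Sum>v\<in>D. w 0 v) * (\<Prod>i<m. \<Sum>v\<in>D. w (Suc i) v)"
    using Suc[of "\<lambda>i. w (Suc i)"] by simp
  also have "\<dots> = (\<Prod>i<Suc m. \<Sum>v\<in>D. w i v)"
    by (simp del: prod.lessThan_Suc add: prod.lessThan_Suc_shift)
  finally show ?case .
qed


abbreviation L :: "nat \<Rightarrow> int list set" where
  "L n \<equiv> {xs. set xs \<subseteq> {-1,0,1} \<and> length xs = n}"

lemma S_sub_L: "S n \<subseteq> L n" by (auto simp: S_def)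

lemma rep_notin_S: "replicate n 0 \<notin> S n" by (auto simp: S_def)

lemma S_neg_disj: "S n \<inter> map uminus ` S n = {}"
proof (rule ccontr)
  assume "S n \<inter> map uminus ` S n \<noteq> {}"
  then obtain x s where xs: "x \<in> S n" "x = map uminus s" "s \<in> S n"
    by blast
  then have s: "s \<in> S n" "map uminus s \<in> S n" by auto
  from s(1) obtain j where j: "j < n" "s!j = 1" "\<forall>i<j. s!i = 0" "length s = n" by (auto simp: S_def)
  from s(2) obtain j' where j': "j' < n" "-(s!j') = 1" "\<forall>i<j'. -(s!i) = 0" by (auto simp: S_def)
  show False
  proof (cases j j' rule: linorder_cases)
    case less then show ?thesis using j j' by auto
  next
    case equal then show ?thesis using j j' by auto
  next
    case greater then show ?thesis using j j' by force
  qed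
qed

lemma L_split: "L n = insert (replicate n 0) (S n \<union> map uminus ` S n)"
proof
  show "insert (replicate n 0) (S n \<union> map uminus ` S n) \<subseteq> L n"
  proof -
    have "map uminus ` S n \<subseteq> L n"
    proof
      fix y assume "y \<in> map uminus ` S n"
      then obtain x where x: "x \<in> L n" "y = map uminus x" using S_sub_L[of n] by blast
      have "set y \<subseteq> {-1,0,1}"
      proof
        fix t assume "t \<in> set y"
        then obtain u where "u \<in> set x" "t = -u" using x(2) by auto
        then show "t \<in> {-1,0,1}" using x(1) by auto
      qed
      then show "y \<in> L n" using x by simp
    qed
    then show ?thesis using S_sub_L[of n] by auto
  qed
next
  show "L n \<subseteq> insert (replicate n 0) (S n \<union> map uminus ` S n)"
  proof
    fix s assume sL: "s \<in> L n"
    show "s \<in> insert (replicate n 0) (S n \<union> map uminus ` S n)"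
    proof (cases "\<exists>j<n. s!j \<noteq> 0")
      case False
      then have "s = replicate n 0" using sL by (auto intro: nth_equalityI)
      then show ?thesis by simp
    next
      case True
      define j where "j = (LEAST j. j < n \<and> s!j \<noteq> 0)"
      have j: "j < n" "s!j \<noteq> 0" using LeastI_ex[OF True] unfolding j_def by auto
      have before: "\<forall>i<j. s!i = 0"
        using not_less_Least[where P="\<lambda>j. j < n \<and> s!j \<noteq> 0"] j(1) unfolding j_def
        by (meson order.strict_trans)
      have nz: "s \<noteq> replicate n 0" using j by auto
      have "s!j \<in> {-1,0,1}" using sL j(1) nth_mem[of j s] by blast
      then consider "s!j = 1" | "s!j = -1" using j(2) by auto
      then show ?thesis
      proof cases
        case 1
        then have "s \<in> S n" using sL j before nz unfolding S_def by auto
        then show ?thesis by simp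
      next
        case 2
        have ms: "map uminus s \<in> S n"
          unfolding S_def using sL j before 2
          by (auto intro!: exI[of _ j] simp: list_eq_iff_nth_eq)
        have "s = map uminus (map uminus s)" by (simp add: comp_def)
        then show ?thesis using ms by blast
      qed
    qed
  qed
qed

lemma finite_L: "finite (L n)"
  using finite_lists_length_eq[of "{-1,0,1::int}" n] by simp

lemma sum_L_split:
  fixes f :: "int list \<Rightarrow> 'a::comm_monoid_add"
  shows "(\<Sum>s\<in>L n. f s) = f (replicate n 0) + (\<Sum>s\<in>S n. f s) + (\<Sum>s\<in>S n. f (map uminus s))"
proof -
  have fS: "finite (S n)" using finite_subset[OF S_sub_L finite_L] .
  have inj: "inj_on (map uminus) (S n :: int list set)" by (auto simp: inj_on_def)
  have r: "replicate n 0 \<notin> S n \<union> map uminus ` S n"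
  proof
    assume "replicate n 0 \<in> S n \<union> map uminus ` S n"
    moreover have "replicate n 0 \<notin> map uminus ` S n"
    proof
      assume "replicate n 0 \<in> map uminus ` S n"
      then obtain y where y: "y \<in> S n" "replicate n 0 = map uminus y" by blast
      then have "y = map uminus (replicate n 0)" by (simp add: comp_def)
      then show False using y(1) rep_notin_S[of n] by simp
    qed
    ultimately show False using rep_notin_S[of n] by blast
  qed
  have "(\<Sum>s\<in>L n. f s) = f (replicate n 0) + (\<Sum>s\<in>S n \<union> map uminus ` S n. f s)"
    unfolding L_split using r fS by (simp add: sum.insert)
  also have "(\<Sum>s\<in>S n \<union> map uminus ` S n. f s) = (\<Sum>s\<in>S n. f s) + (\<Sum>s\<in>map uminus ` S n. f s)"
    using fS S_neg_disj[of n] by (simp add: sum.union_disjoint)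
  also have "(\<Sum>s\<in>map uminus ` S n. f s) = (\<Sum>s\<in>S n. f (map uminus s))"
    using sum.reindex[OF inj] by simp
  finally show ?thesis by (simp add: add.assoc)
qed


definition ind :: "bool \<Rightarrow> int" where "ind P = (if P then 1 else 0)"

lemma prod_ind: "finite A \<Longrightarrow> (\<Prod>i\<in>A. ind (P i)) = ind (\<forall>i\<in>A. P i)"
  by (induction A rule: finite_induct) (auto simp: ind_def)

lemma prod_if_pow: "finite A \<Longrightarrow> (\<Prod>i\<in>A. if P i then (a::int) else 1) = a ^ card {i\<in>A. P i}"
  by (simp add: prod.If_cases Int_def conj_commute)

lemma sum_ind: "finite A \<Longrightarrow> (\<Sum>i\<in>A. ind (P i)) = int (card {i\<in>A. P i})"
  by (simp add: ind_def sum.If_cases Int_def conj_commute)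

definition disj :: "nat \<Rightarrow> int list \<Rightarrow> int list \<Rightarrow> bool" where
  "disj n x s \<longleftrightarrow> (\<forall>c<n. s!c = 0 \<or> x!c = 0)"
definition cns :: "nat \<Rightarrow> int list \<Rightarrow> int list \<Rightarrow> int \<Rightarrow> bool" where
  "cns n x s k \<longleftrightarrow> (\<forall>c<n. s!c \<noteq> 0 \<and> x!c \<noteq> 0 \<longrightarrow> x!c = k * s!c)"
definition allowed :: "nat \<Rightarrow> int list \<Rightarrow> int list \<Rightarrow> int \<Rightarrow> bool" where
  "allowed n x s v = (if v = 0 then disj n x s else cns n x s v)"
definition ok :: "nat \<Rightarrow> (nat \<Rightarrow> int list) \<Rightarrow> int list \<Rightarrow> nat \<Rightarrow> int \<Rightarrow> bool" where
  "ok m X \<alpha> c v \<longleftrightarrow> (\<forall>i<m. v \<noteq> 0 \<and> X i!c \<noteq> 0 \<longrightarrow> \<alpha>!i \<noteq> 0 \<and> X i!c = \<alpha>!i * v)"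

definition E :: "nat \<Rightarrow> int list \<Rightarrow> int list \<Rightarrow> bool" where
  "E n x s \<longleftrightarrow> \<not> disj n x s \<and> (cns n x s 1 \<or> cns n x s (-1))"

lemma elim_iff: "length x = n \<Longrightarrow> eliminates n (map Some x) s \<longleftrightarrow> E n x s"
  unfolding eliminates_def E_def disj_def cns_def by auto

lemma h_sum: "(\<Sum>v\<in>{-1,0,1::int}. (if v = 0 then -2 else 1) * ind (allowed n x s v)) = ind (E n x s)"
proof -
  have a: "disj n x s \<Longrightarrow> cns n x s k" for k unfolding disj_def cns_def by auto
  have b: "cns n x s 1 \<Longrightarrow> cns n x s (-1) \<Longrightarrow> disj n x s"
    unfolding disj_def cns_def by force
  show ?thesis
    using a b by (auto simp: ind_def allowed_def E_def)
qed

lemma W_iff: "(\<forall>i<m. allowed n (X i) s (\<alpha>!i)) \<longleftrightarrow> (\<forall>c<n. ok m X \<alpha> c (s!c))"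
  unfolding allowed_def disj_def cns_def ok_def
  by (auto split: if_splits simp: mult.commute) 

lemma BSp_iff: "c \<in> BSp m n X \<alpha> \<longleftrightarrow> c < n \<and> (\<exists>i<m. X i!c \<noteq> 0) \<and> (ok m X \<alpha> c 1 \<or> ok m X \<alpha> c (-1))"
proof
  assume "c \<in> BSp m n X \<alpha>"
  then obtain a k where c: "c < n" "\<exists>i<m. X i!c \<noteq> 0" "\<forall>i<m. a i \<in> {0,1::int}" "k \<in> {1,-1::int}"
    "\<forall>i<m. X i ! c = k * (a i * \<alpha> ! i)" unfolding BSp_def by blast
  have "ok m X \<alpha> c k" unfolding ok_def
  proof (intro allI impI)
    fix i assume i: "i < m" "k \<noteq> 0 \<and> X i ! c \<noteq> 0"
    then have "a i = 1" using c(3,5) by fastforce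
    then show "\<alpha>!i \<noteq> 0 \<and> X i!c = \<alpha>!i * k" using c(5) i by auto
  qed
  then show "c < n \<and> (\<exists>i<m. X i!c \<noteq> 0) \<and> (ok m X \<alpha> c 1 \<or> ok m X \<alpha> c (-1))"
    using c by auto
next
  assume c: "c < n \<and> (\<exists>i<m. X i!c \<noteq> 0) \<and> (ok m X \<alpha> c 1 \<or> ok m X \<alpha> c (-1))"
  then obtain k where k: "k \<in> {1,-1::int}" "ok m X \<alpha> c k" by blast
  define a where "a i = (if X i!c \<noteq> 0 then 1 else 0::int)" for i
  have "\<forall>i<m. X i ! c = k * (a i * \<alpha> ! i)"
    using k unfolding a_def ok_def by auto
  moreover have "\<forall>i<m. a i \<in> {0,1}" "\<exists>i<m. a i \<noteq> 0" using c unfolding a_def by auto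
  ultimately show "c \<in> BSp m n X \<alpha>" unfolding BSp_def using c k by blast
qed

lemma col_count:
  assumes "c < n"
  shows "(\<Sum>v\<in>{-1,0,1::int}. ind (ok m X \<alpha> c v)) =
     (if \<forall>i<m. X i!c = 0 then 3 else 1) * (if c \<in> BSp m n X \<alpha> then 2 else 1)"
proof (cases "\<forall>i<m. X i!c = 0")
  case True
  then have "\<And>v. ok m X \<alpha> c v" unfolding ok_def by auto
  moreover have "c \<notin> BSp m n X \<alpha>" using True BSp_iff by blast
  ultimately show ?thesis using True by (simp add: ind_def)
next
  case False
  have o0: "ok m X \<alpha> c 0" unfolding ok_def by auto
  have nb: "\<not> (ok m X \<alpha> c 1 \<and> ok m X \<alpha> c (-1))"
  proof
    assume "ok m X \<alpha> c 1 \<and> ok m X \<alpha> c (-1)"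
    moreover obtain i where "i < m" "X i!c \<noteq> 0" using False by blast
    ultimately show False unfolding ok_def by force
  qed
  have "c \<in> BSp m n X \<alpha> \<longleftrightarrow> (ok m X \<alpha> c 1 \<or> ok m X \<alpha> c (-1))"
    using BSp_iff assms False by blast
  then show ?thesis using False o0 nb by (auto simp: ind_def)
qed

lemma BSp_sub: "BSp m n X \<alpha> \<subseteq> {..<n}" unfolding BSp_def by auto

lemma count_W:
  shows "(\<Sum>s\<in>L n. ind (\<forall>i<m. allowed n (X i) s (\<alpha>!i))) = 3 ^ zX m n X * 2 ^ card (BSp m n X \<alpha>)"
proof -
  have "(\<Sum>s\<in>L n. ind (\<forall>i<m. allowed n (X i) s (\<alpha>!i))) = (\<Sum>s\<in>L n. \<Prod>c<n. ind (ok m X \<alpha> c (s!c)))"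
    by (simp add: W_iff prod_ind Ball_def lessThan_iff)
  also have "\<dots> = (\<Prod>c<n. \<Sum>v\<in>{-1,0,1::int}. ind (ok m X \<alpha> c v))"
    by (rule sum_prod_lists) simp
  also have "\<dots> = (\<Prod>c<n. (if \<forall>i<m. X i!c = 0 then 3 else 1) * (if c \<in> BSp m n X \<alpha> then 2 else 1))"
    by (intro prod.cong refl col_count) simp
  also have "\<dots> = 3 ^ card {c\<in>{..<n}. \<forall>i<m. X i!c = 0} * 2 ^ card {c\<in>{..<n}. c \<in> BSp m n X \<alpha>}"
    by (simp add: prod.distrib prod_if_pow)
  also have "{c\<in>{..<n}. c \<in> BSp m n X \<alpha>} = BSp m n X \<alpha>" using BSp_sub[of m n X \<alpha>] by auto
  also have "{c\<in>{..<n}. \<forall>i<m. X i!c = 0} = {c. c < n \<and> (\<forall>i<m. X i ! c = 0)}" by auto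
  finally show ?thesis unfolding zX_def .
qed


lemma E_neg: "length s = n \<Longrightarrow> E n x (map uminus s) = E n x s"
  unfolding E_def disj_def cns_def by auto

lemma zeros_neg: "zeros (map uminus \<alpha>) = zeros \<alpha>"
  unfolding zeros_def by (rule arg_cong[where f=card]) auto

lemma ok_neg: "length \<alpha> = m \<Longrightarrow> ok m X (map uminus \<alpha>) c v = ok m X \<alpha> c (-v)"
  unfolding ok_def by auto

lemma BSp_neg: "length \<alpha> = m \<Longrightarrow> BSp m n X (map uminus \<alpha>) = BSp m n X \<alpha>"
  using BSp_iff[of _ m n X] ok_neg[of \<alpha> m X] by auto

lemma BSp_rep: "BSp m n X (replicate m 0) = {}"
  unfolding BSp_def by auto

lemma zeros_rep: "zeros (replicate m 0) = m"
proof -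
  have "{i. i < m \<and> replicate m (0::int) ! i = 0} = {..<m}" by auto
  then show ?thesis unfolding zeros_def by simp
qed

lemma M1:
  "(\<Sum>s\<in>L n. ind (\<forall>i<m. E n (X i) s)) =
   (\<Sum>\<alpha>\<in>L m. (-2) ^ zeros \<alpha> * (3 ^ zX m n X * 2 ^ card (BSp m n X \<alpha>)))"
proof -
  define w where "w s i v = (if v = 0 then -2 else 1) * ind (allowed n (X i) s v)" for s i v
  have "(\<Sum>s\<in>L n. ind (\<forall>i<m. E n (X i) s)) = (\<Sum>s\<in>L n. \<Prod>i<m. \<Sum>v\<in>{-1,0,1::int}. w s i v)"
    unfolding w_def h_sum by (simp add: prod_ind Ball_def lessThan_iff)
  also have "\<dots> = (\<Sum>s\<in>L n. \<Sum>\<alpha>\<in>L m. \<Prod>i<m. w s i (\<alpha>!i))"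
    by (subst sum_prod_lists) simp_all
  also have "\<dots> = (\<Sum>\<alpha>\<in>L m. \<Sum>s\<in>L n. \<Prod>i<m. w s i (\<alpha>!i))"
    by (rule sum.swap)
  also have "\<dots> = (\<Sum>\<alpha>\<in>L m. (-2) ^ zeros \<alpha> * (\<Sum>s\<in>L n. ind (\<forall>i<m. allowed n (X i) s (\<alpha>!i))))"
  proof (rule sum.cong[OF refl])
    fix \<alpha> assume "\<alpha> \<in> L m"
    then have len: "length \<alpha> = m" by simp
    have z: "(\<Prod>i<m. if \<alpha>!i = 0 then -2 else 1) = ((-2::int) ^ zeros \<alpha>)"
      by (simp add: prod_if_pow zeros_def len)
    have "(\<Sum>s\<in>L n. \<Prod>i<m. w s i (\<alpha>!i)) = (\<Sum>s\<in>L n. (\<Prod>i<m. if \<alpha>!i = 0 then -2 else 1) * ind (\<forall>i<m. allowed n (X i) s (\<alpha>!i)))"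
      unfolding w_def by (simp add: prod.distrib prod_ind Ball_def lessThan_iff)
    then show "(\<Sum>s\<in>L n. \<Prod>i<m. w s i (\<alpha>!i)) = (-2) ^ zeros \<alpha> * (\<Sum>s\<in>L n. ind (\<forall>i<m. allowed n (X i) s (\<alpha>!i)))"
      by (simp add: z sum_distrib_left)
  qed
  also have "\<dots> = (\<Sum>\<alpha>\<in>L m. (-2) ^ zeros \<alpha> * (3 ^ zX m n X * 2 ^ card (BSp m n X \<alpha>)))"
    by (simp add: count_W)
  finally show ?thesis .
qed


theorem mainTheorem12:
  fixes m n :: nat and X :: "nat \<Rightarrow> int list"
  assumes "m \<ge> 1"
    and "\<forall>i<m. X i \<in> S n"
    and "inj_on X {..<m}"
  shows "int (card (\<Inter>i\<in>{..<m}. Elim n {X i})) =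
    3 ^ zX m n X * (- ((-2) ^ (m - 1)) +
      (\<Sum>\<alpha>\<in>S m. (-1) ^ zeros \<alpha> * 2 ^ (zeros \<alpha> + card (BSp m n X \<alpha>))))"
proof -
  have lenX: "length (X i) = n" if "i < m" for i using assms(2) that by (auto simp: S_def)
  have m0: "0 \<in> {..<m}" using assms(1) by auto
  have setEq: "(\<Inter>i\<in>{..<m}. Elim n {X i}) = {s \<in> S n. \<forall>i<m. E n (X i) s}"
    using m0 lenX unfolding Elim_def by (auto simp: elim_iff)
  define f where "f s = ind (\<forall>i<m. E n (X i) s)" for s
  define T where "T \<alpha> = (-2::int) ^ zeros \<alpha> * (3 ^ zX m n X * 2 ^ card (BSp m n X \<alpha>))" for \<alpha>
  have frep: "f (replicate n 0) = 0"
  proof -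
    have "\<not> E n (X 0) (replicate n 0)" unfolding E_def disj_def by auto
    then show ?thesis using assms(1) unfolding f_def ind_def by (metis less_le_trans zero_less_one)
  qed
  have fneg: "(\<Sum>s\<in>S n. f (map uminus s)) = (\<Sum>s\<in>S n. f s)"
    by (rule sum.cong[OF refl]) (auto simp: f_def E_neg S_def)
  have Tneg: "(\<Sum>\<alpha>\<in>S m. T (map uminus \<alpha>)) = (\<Sum>\<alpha>\<in>S m. T \<alpha>)"
    by (rule sum.cong[OF refl]) (auto simp: T_def zeros_neg BSp_neg S_def)
  have Trep: "T (replicate m 0) = (-2)^m * 3 ^ zX m n X"
    by (simp add: T_def zeros_rep BSp_rep)
  have fS: "finite (S n)" using finite_subset[OF S_sub_L finite_L] .
  have "(\<Sum>s\<in>L n. f s) = (\<Sum>\<alpha>\<in>L m. T \<alpha>)" unfolding f_def T_def by (rule M1)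
  then have "2 * (\<Sum>s\<in>S n. f s) = (-2)^m * 3 ^ zX m n X + 2 * (\<Sum>\<alpha>\<in>S m. T \<alpha>)"
    unfolding sum_L_split[where n=n and f=f] sum_L_split[where n=m and f=T] frep fneg Tneg Trep by simp
  moreover have "(\<Sum>s\<in>S n. f s) = int (card (\<Inter>i\<in>{..<m}. Elim n {X i}))"
    unfolding setEq f_def by (simp add: sum_ind fS)
  moreover have "(\<Sum>\<alpha>\<in>S m. T \<alpha>) = 3 ^ zX m n X * (\<Sum>\<alpha>\<in>S m. (-1) ^ zeros \<alpha> * 2 ^ (zeros \<alpha> + card (BSp m n X \<alpha>)))"
    unfolding T_def sum_distrib_left
    by (rule sum.cong[OF refl]) (simp add: power_add power_mult_distrib[symmetric] algebra_simps)
  moreover have "(-2::int)^m = -2 * (-2)^(m-1)" using assms(1)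
    by (metis Suc_diff_1 less_le_trans power_Suc zero_less_one)
  ultimately show ?thesis by (simp add: algebra_simps)
qed

end
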